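(* Let $k\ge1$ and let $\psi:\mathbb{Z}^k\to\mathbb{Z}^k$ be an automorphism. (i) If some nonzero $r\in\mathbb{Z}^k$ has $\psi$-orbit of cardinality $c$ (finite or infinite), then there exist infinitely many distinct $\psi$-orbits of cardinality $c$. (ii) If $R(\psi)<\infty$, then $0$ is the only fixed point of $\psi$, i.e. there is a unique one-point orbit.
   Context: For an automorphism $\psi$ of an abelian group $G$, $R(\psi)$ is the number of Reidemeister classes, i.e. classes of the relation $g\sim g+h-\psi(h)$, $h\in G$. *)

theory Defs
  imports "HOL-Analysis.Analysis" "HOL-Library.Equipollence"
begin

text \<open>Z^k is modelled as int ^ 'k (k = CARD('k) >= 1). A group automorphism of
  (Z^k,+) is a bijective additive map.\<close>

definition is_aut :: "('a::ab_group_add \<Rightarrow> 'a) \<Rightarrow> bool" where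
  "is_aut \<psi> \<longleftrightarrow> bij \<psi> \<and> (\<forall>x y. \<psi> (x + y) = \<psi> x + \<psi> y)"

definition orbit :: "('a \<Rightarrow> 'a) \<Rightarrow> 'a \<Rightarrow> 'a set" where
  "orbit \<psi> r = {(\<psi> ^^ n) r | n. True} \<union> {(inv \<psi> ^^ n) r | n. True}"

definition reid_rel :: "('a::ab_group_add \<Rightarrow> 'a) \<Rightarrow> ('a \<times> 'a) set" where
  "reid_rel \<psi> = {(g, g'). \<exists>h. g' = g + h - \<psi> h}"

definition reid_finite :: "('a::ab_group_add \<Rightarrow> 'a) \<Rightarrow> bool" where
  "reid_finite \<psi> \<longleftrightarrow> finite (UNIV // reid_rel \<psi>)"

end

theory Submission
  imports Defs
begin

definition addf :: "('a::ab_group_add \<Rightarrow> 'a) \<Rightarrow> bool" where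
  "addf f \<longleftrightarrow> (\<forall>x y. f (x + y) = f x + f y)"

lemma addf_0: "addf f \<Longrightarrow> f 0 = 0"
  unfolding addf_def by (metis add_cancel_right_right add_0)

lemma addf_neg: "addf f \<Longrightarrow> f (- x) = - f x"
  unfolding addf_def by (metis addf_0 addf_def add.right_inverse eq_neg_iff_add_eq_0)

lemma addf_diff: "addf f \<Longrightarrow> f (x - y) = f x - f y"
  by (metis addf_def addf_neg diff_conv_add_uminus)

lemma addf_sum: "addf f \<Longrightarrow> f (sum g A) = (\<Sum>a\<in>A. f (g a))"
  apply (induction A rule: infinite_finite_induct)
    apply (auto simp: addf_0)
  by (simp add: addf_def)

lemma addf_smult_nat: "addf (f :: int^'k \<Rightarrow> int^'k) \<Longrightarrow> f (int n *s x) = int n *s f x"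
proof (induction n)
  case 0 then show ?case by (simp add: addf_0 vec_eq_iff)
next
  case (Suc n)
  have "int (Suc n) *s x = x + int n *s x" by (simp add: vec_eq_iff algebra_simps)
  moreover have "int (Suc n) *s f x = f x + int n *s f x" by (simp add: vec_eq_iff algebra_simps)
  ultimately show ?case using Suc by (simp add: addf_def)
qed

lemma addf_smult: assumes a: "addf (f :: int^'k \<Rightarrow> int^'k)" shows "f (c *s x) = c *s f x"
proof (cases c rule: int_cases)
  case (nonneg n) then show ?thesis
    using addf_smult_nat a by blast
next
  case (neg n)
  have "c *s x = - (int (Suc n) *s x)" using neg by (simp add: vec_eq_iff)
  moreover have "c *s f x = - (int (Suc n) *s f x)" using neg by (simp add: vec_eq_iff)
  ultimately show ?thesis using a addf_neg addf_smult_nat by metis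
qed

lemma addf_funpow: "addf f \<Longrightarrow> addf (f ^^ n)"
  by (induction n) (auto simp: addf_def)

lemma aut_addf: "is_aut \<psi> \<Longrightarrow> addf \<psi>"
  by (simp add: is_aut_def addf_def)

lemma aut_inv_addf: "is_aut \<psi> \<Longrightarrow> addf (inv \<psi>)"
  unfolding is_aut_def addf_def
proof (intro allI)
  fix x y assume a: "bij \<psi> \<and> (\<forall>x y. \<psi> (x + y) = \<psi> x + \<psi> y)"
  have "\<psi> (inv \<psi> x + inv \<psi> y) = x + y"
    using a by (simp add: bij_is_surj surj_f_inv_f)
  then show "inv \<psi> (x + y) = inv \<psi> x + inv \<psi> y"
    using a by (metis bij_is_inj inv_f_f)
qed

lemma orbit_smult:
  fixes \<psi> :: "int ^ 'k \<Rightarrow> int ^ 'k"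
  assumes "is_aut \<psi>"
  shows "orbit \<psi> (c *s r) = (\<lambda>x. c *s x) ` orbit \<psi> r"
proof -
  have A: "(\<psi> ^^ n) (c *s r) = c *s (\<psi> ^^ n) r" for n
    using addf_smult[OF addf_funpow[OF aut_addf[OF assms]]] by blast
  have B: "(inv \<psi> ^^ n) (c *s r) = c *s (inv \<psi> ^^ n) r" for n
    using addf_smult[OF addf_funpow[OF aut_inv_addf[OF assms]]] by blast
  show ?thesis unfolding orbit_def using A B by auto
qed

lemma part1:
  fixes \<psi> :: "int ^ 'k \<Rightarrow> int ^ 'k"
  assumes aut: "is_aut \<psi>" and r: "r \<noteq> 0"
  shows "infinite {orbit \<psi> s | s. orbit \<psi> s \<approx> orbit \<psi> r}"
proof -
  obtain i where ri: "r $ i \<noteq> 0" using r by (metis vec_eq_iff zero_index)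
  define m :: int where "m = \<bar>r $ i\<bar> + 1"
  have m2: "m \<ge> 2" using ri m_def by auto
  define Orb where "Orb j = orbit \<psi> (m ^ j *s r)" for j :: nat
  have inO: "Orb j \<in> {orbit \<psi> s | s. orbit \<psi> s \<approx> orbit \<psi> r}" for j
  proof -
    have "m ^ j \<noteq> 0" using m2 by auto
    then have "inj ((*s) (m ^ j) :: int^'k \<Rightarrow> int^'k)"
      by (auto simp: inj_def vec_eq_iff)
    then have "Orb j \<approx> orbit \<psi> r" unfolding Orb_def orbit_smult[OF aut]
      by (meson inj_on_image_eqpoll_self inj_on_subset subset_UNIV)
    then show ?thesis unfolding Orb_def by blast
  qed
  have neq: "Orb j \<noteq> Orb l" if jl: "j < l" for j l
  proof
    assume eq: "Orb j = Orb l"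
    have "m ^ j *s r \<in> Orb j" unfolding Orb_def orbit_def
      by (auto intro!: exI[of _ 0])
    then have "m ^ j *s r \<in> (\<lambda>x. m ^ l *s x) ` orbit \<psi> r"
      using eq unfolding Orb_def orbit_smult[OF aut] by simp
    then obtain y where y: "m ^ j *s r = m ^ l *s y" by blast
    then have "m ^ j * r $ i = m ^ j * (m ^ (l - j) * y $ i)"
      using jl by (metis vector_smult_component power_add le_add_diff_inverse less_imp_le mult.assoc)
    then have e: "r $ i = m ^ (l - j) * y $ i" using m2 by simp
    then have "y $ i \<noteq> 0" using ri by auto
    then have "\<bar>r $ i\<bar> \<ge> m ^ (l - j)" using e m2
    proof -
      have p: "m ^ (l - j) > 0" using m2 by simp
      have "\<bar>r $ i\<bar> = m ^ (l - j) * \<bar>y $ i\<bar>" using e p by (simp add: abs_mult)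
      moreover have "\<bar>y $ i\<bar> \<ge> 1" using \<open>y $ i \<noteq> 0\<close> by linarith
      ultimately show ?thesis using p by (metis mult_left_mono mult.right_neutral less_imp_le)
    qed
    moreover have "m ^ (l - j) \<ge> m" using m2 jl
      using power_increasing[of 1 "l - j" m] by simp
    ultimately show False using m_def by auto
  qed
  have "inj Orb" by (metis neq inj_def linorder_neqE_nat)
  then have "infinite (range Orb)" using finite_imageD by blast
  then show ?thesis using inO by (meson infinite_super image_subsetI)
qed

lemma reid_mult:
  fixes \<psi> :: "int ^ 'k \<Rightarrow> int ^ 'k"
  assumes aut: "is_aut \<psi>" and fin: "reid_finite \<psi>"
  shows "\<exists>n h. n \<ge> 1 \<and> n *s e = h - \<psi> h"
proof -
  define F where "F j = reid_rel \<psi> `` {int j *s e}" for j :: nat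
  have "range F \<subseteq> UNIV // reid_rel \<psi>" unfolding F_def quotient_def by blast
  then have "finite (range F)" using fin unfolding reid_finite_def by (meson finite_subset)
  then have "\<not> inj F" using finite_imageD by blast
  then obtain j l where jl: "F j = F l" "j < l"
    by (metis inj_def linorder_neqE_nat)
  have "int l *s e \<in> F l" unfolding F_def reid_rel_def using addf_0[OF aut_addf[OF aut]] by (auto intro!: exI[of _ 0])
  then have "int l *s e \<in> F j" using jl by simp
  then obtain h where h: "int l *s e = int j *s e + h - \<psi> h" unfolding F_def reid_rel_def by auto
  have "int (l - j) *s e = h - \<psi> h"
    using h jl(2) by (simp add: vec_eq_iff of_nat_diff algebra_simps)
  then show ?thesis using jl(2) by (intro exI[of _ "int (l - j)"]) auto
qed

definition rv :: "int ^ 'k \<Rightarrow> real ^ 'k" where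
  "rv x = (\<chi> j. real_of_int (x $ j))"

lemma part2:
  fixes \<psi> :: "int ^ 'k \<Rightarrow> int ^ 'k"
  assumes aut: "is_aut \<psi>" and fin: "reid_finite \<psi>" and fx: "\<psi> x = x"
  shows "x = 0"
proof -
  have ad: "addf \<psi>" using aut_addf[OF aut] .
  define c where "c i = axis i 1 - \<psi> (axis i 1)" for i :: 'k
  define L where "L y = (\<chi> j. \<Sum>i\<in>UNIV. y $ i * real_of_int (c i $ j))" for y :: "real ^ 'k"
  have lin: "linear L"
    by (rule linearI) (simp_all add: L_def vec_eq_iff sum.distrib sum_distrib_left algebra_simps)
  have Lrv: "L (rv z) = rv (z - \<psi> z)" for z
  proof -
    have "z - \<psi> z = (\<Sum>i\<in>UNIV. z $ i *s axis i 1) - \<psi> (\<Sum>i\<in>UNIV. z $ i *s axis i 1)"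
      by (simp add: basis_expansion)
    also have "\<dots> = (\<Sum>i\<in>UNIV. z $ i *s c i)"
      by (simp add: addf_sum[OF ad] addf_smult[OF ad] c_def sum_subtractf vec_eq_iff algebra_simps)
    finally have "z - \<psi> z = (\<Sum>i\<in>UNIV. z $ i *s c i)" .
    then show ?thesis by (simp add: L_def rv_def vec_eq_iff sum_component)
  qed
  have "\<exists>n h. n \<ge> 1 \<and> n *s axis i 1 = h - \<psi> h" for i
    using reid_mult[OF aut fin] by blast
  then obtain n h where nh: "\<And>i. n i \<ge> 1 \<and> n i *s axis i 1 = h i - \<psi> (h i)" by metis
  have Lh: "L (rv (h i)) = real_of_int (n i) *\<^sub>R axis i 1" for i
  proof -
    have "L (rv (h i)) = rv (n i *s axis i 1)" unfolding Lrv using nh[of i] by simp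
    then show ?thesis by (simp add: rv_def vec_eq_iff axis_def)
  qed
  have "surj L"
  proof (rule surjI)
    fix y :: "real ^ 'k"
    have "L (\<Sum>i\<in>UNIV. (y $ i / real_of_int (n i)) *\<^sub>R rv (h i))
          = (\<Sum>i\<in>UNIV. (y $ i / real_of_int (n i)) *\<^sub>R L (rv (h i)))"
      by (simp add: linear_sum[OF lin] linear_scale[OF lin])
    also have "\<dots> = (\<Sum>i\<in>UNIV. y $ i *s axis i 1)"
    proof (rule sum.cong)
      fix i :: 'k
      have "real_of_int (n i) \<noteq> 0" using nh[of i] by simp
      then show "(y $ i / real_of_int (n i)) *\<^sub>R L (rv (h i)) = y $ i *s axis i 1"
        by (simp add: Lh vec_eq_iff)
    qed simp
    also have "\<dots> = y" by (rule basis_expansion)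
    finally show "L (\<Sum>i\<in>UNIV. (y $ i / real_of_int (n i)) *\<^sub>R rv (h i)) = y" .
  qed
  then have "inj L" using linear_surj_imp_inj[OF lin] by blast
  moreover have "L (rv x) = L 0" using Lrv[of x] fx linear_0[OF lin] by (simp add: rv_def vec_eq_iff)
  ultimately have "rv x = 0" by (meson injD)
  then show ?thesis by (simp add: rv_def vec_eq_iff)
qed

theorem lemma3p3:
  fixes \<psi> :: "int ^ 'k \<Rightarrow> int ^ 'k"
  assumes "is_aut \<psi>"
  shows "(\<forall>r. r \<noteq> 0 \<longrightarrow>
            infinite {orbit \<psi> s | s. orbit \<psi> s \<approx> orbit \<psi> r})
       \<and> (reid_finite \<psi> \<longrightarrow> {x. \<psi> x = x} = {0})"
  using part1[OF assms] part2[OF assms] addf_0[OF aut_addf[OF assms]] by auto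


end
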